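(* Let $c\in\mathbb{R}$, let $I_c=[0,-1/c]$ if $c<0$ and $I_c=[0,+\infty)$ if $c\geq0$, and let $n>0$ be real with $n>c$ if $c\geq 0$, or $n=-cl$ for some $l\in\mathbb{N}$ if $c<0$. For $k\in\mathbb{N}_0$, $x\in I_c$ let $$p_{n,k}^{[c]}(x)=(-1)^k\binom{-n/c}{k}(cx)^k(1+cx)^{-\frac{n}{c}-k}\ (c\neq0),\qquad p_{n,k}^{[0]}(x)=\frac{(nx)^k}{k!}e^{-nx},$$ and let $T_{n,c}(x)=1-\sum_{k=0}^\infty\big(p_{n,k}^{[c]}(x)\big)^2$ (Tsallis entropy of order 2). Then: (i) $T_{n,c}$ is concave on $I_c$; for $c\geq 0$ it is increasing on $[0,+\infty)$; for $c<0$ it is increasing on $[0,-\frac{1}{2c}]$ and decreasing on $[-\frac{1}{2c},-\frac1c]$; (ii) $u=T_{n,c}$ satisfies on $I_c$ the equation $$x(1+cx)(1+2cx)u''(x)+\big(4(n+c)x(1+cx)+1\big)u'(x)+2n(1+2cx)u(x)=2n(1+2cx).$$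
   Context: For $\alpha\in\mathbb{R}$ and $k\in\mathbb{N}$, $\binom{\alpha}{k}=\frac{\alpha(\alpha-1)\cdots(\alpha-k+1)}{k!}$ and $\binom{\alpha}{0}=1$. *)

theory Defs
  imports "HOL-Analysis.Analysis"
begin

definition Ic :: "real \<Rightarrow> real set" where
  "Ic c = (if c < 0 then {0 .. -1/c} else {0..})"

text \<open>For c > 0 the base 1+cx is positive on I_c and
  the real power is used; for c < 0 the exponent -n/c - k = l - k is an integer and
  the integer power is used (so that the value at x = -1/c, where 1+cx = 0, is the
  usual polynomial value; note 0 powi 0 = 1).\<close>
definition p :: "real \<Rightarrow> real \<Rightarrow> nat \<Rightarrow> real \<Rightarrow> real" where
  "p n c k x =
     (if c = 0 then (n*x)^k / fact k * exp (- n*x)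
      else if c > 0 then (-1)^k * ((-n/c) gchoose k) * (c*x)^k * (1 + c*x) powr (-n/c - real k)
      else (-1)^k * ((-n/c) gchoose k) * (c*x)^k * (1 + c*x) powi (\<lfloor>-n/c\<rfloor> - int k))"

definition T :: "real \<Rightarrow> real \<Rightarrow> real \<Rightarrow> real" where
  "T n c x = 1 - (\<Sum>k. (p n c k x)^2)"

end

theory Submission
  imports Defs
begin



lemma cos_int_integral:
  fixes m :: int assumes "m \<noteq> 0"
  shows "((\<lambda>t. cos (of_int m * t)) has_integral 0) {0..2*pi}"
proof -
  have "((\<lambda>t. cos (of_int m * t)) has_integral
      ((\<lambda>t. sin (of_int m * t) / of_int m) (2*pi) - (\<lambda>t. sin (of_int m * t) / of_int m) 0)) {0..2*pi}"
    apply (rule fundamental_theorem_of_calculus)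
    using assms
    by (auto intro!: derivative_eq_intros simp: has_real_derivative_iff_has_vector_derivative[symmetric])
  moreover have "sin (of_int m * (2*pi)) = 0"
  proof -
    have "of_int m * (2*pi) = of_int (2*m) * pi" by simp
    then show ?thesis by (simp only: sin_times_pi_eq_0) (simp add: Ints_of_int)
  qed
  ultimately show ?thesis by simp
qed

lemma cos_diff_integral:
  fixes j k :: nat
  shows "((\<lambda>t. cos ((real j - real k) * t)) has_integral (if j = k then 2*pi else 0)) {0..2*pi}"
proof (cases "j = k")
  case True
  then show ?thesis using has_integral_const_real[of "1::real" 0 "2*pi"] by simp
next
  case False
  have "(real j - real k) = of_int (int j - int k)" by simp
  then show ?thesis using cos_int_integral[of "int j - int k"] False by simp
qed

lemma normsq_partial:
  fixes a :: "nat \<Rightarrow> real"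
  shows "(cmod (\<Sum>k<N. of_real (a k) * cis (real k * t)))^2
       = (\<Sum>j<N. \<Sum>k<N. a j * a k * cos ((real j - real k) * t))"
proof -
  let ?z = "(\<Sum>k<N. of_real (a k) * cis (real k * t))"
  have "complex_of_real ((cmod ?z)^2) = ?z * cnj ?z" by (rule complex_norm_square)
  also have "cnj ?z = (\<Sum>k<N. of_real (a k) * cis (- (real k * t)))"
    by (simp add: cis_cnj)
  also have "?z * \<dots> = (\<Sum>j<N. \<Sum>k<N. (of_real (a j) * cis (real j * t)) * (of_real (a k) * cis (- (real k * t))))"
    by (rule sum_product)
  also have "\<dots> = (\<Sum>j<N. \<Sum>k<N. of_real (a j * a k) * cis ((real j - real k) * t))"
    by (intro sum.cong refl) (simp add: cis_mult algebra_simps)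
  finally have "complex_of_real ((cmod ?z)^2) = (\<Sum>j<N. \<Sum>k<N. of_real (a j * a k) * cis ((real j - real k) * t))" .
  then have "(cmod ?z)^2 = Re (\<Sum>j<N. \<Sum>k<N. of_real (a j * a k) * cis ((real j - real k) * t))"
    by (metis Re_complex_of_real)
  also have "\<dots> = (\<Sum>j<N. \<Sum>k<N. a j * a k * cos ((real j - real k) * t))"
    by (simp add: Re_sum)
  finally show ?thesis .
qed

lemma integral_partial:
  fixes a :: "nat \<Rightarrow> real"
  shows "((\<lambda>t. (cmod (\<Sum>k<N. of_real (a k) * cis (real k * t)))^2) has_integral (2*pi*(\<Sum>k<N. (a k)^2))) {0..2*pi}"
proof -
  have "((\<lambda>t. (\<Sum>j<N. \<Sum>k<N. a j * a k * cos ((real j - real k) * t))) has_integral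
     (\<Sum>j<N. \<Sum>k<N. a j * a k * (if j = k then 2*pi else 0))) {0..2*pi}"
    by (intro has_integral_sum finite_lessThan has_integral_mult_right cos_diff_integral)
  also have "(\<Sum>j<N. \<Sum>k<N. a j * a k * (if j = k then 2*pi else 0)) = 2*pi*(\<Sum>k<N. (a k)^2)"
    by (simp add: sum_distrib_left power2_eq_square if_distrib mult_ac cong: if_cong)
  finally show ?thesis by (simp add: normsq_partial)
qed

lemma parseval_aux:
  fixes a :: "nat \<Rightarrow> real" and F :: "real \<Rightarrow> complex"
  assumes a0: "\<And>k. a k \<ge> 0" and sa: "summable a"
    and sF: "\<And>t. (\<lambda>k. of_real (a k) * cis (real k * t)) sums F t"
    and cF: "continuous_on {0..2*pi} (\<lambda>t. (cmod (F t))^2)"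
  shows "(\<lambda>k. (a k)^2) sums (integral {0..2*pi} (\<lambda>t. (cmod (F t))^2) / (2*pi))"
proof -
  define FN where "FN N t = (\<Sum>k<N. of_real (a k) * cis (real k * t) :: complex)" for N t
  define A where "A = suminf a"
  define tl where "tl N = (\<Sum>k. a (k + N))" for N
  define I where "I = integral {0..2*pi} (\<lambda>t. (cmod (F t))^2)"
  have tl_eq: "tl N = A - (\<Sum>k<N. a k)" for N
    unfolding tl_def A_def by (rule suminf_minus_initial_segment[OF sa])
  have "(\<lambda>N. \<Sum>k<N. a k) \<longlonglongrightarrow> A" unfolding A_def by (rule summable_LIMSEQ[OF sa])
  then have "(\<lambda>N. A - (\<Sum>k<N. a k)) \<longlonglongrightarrow> A - A" by (intro tendsto_intros)
  then have tl0: "tl \<longlonglongrightarrow> 0" by (simp add: tl_eq[abs_def])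
  have A0: "A \<ge> 0" unfolding A_def using sa a0 by (simp add: suminf_nonneg)
  have snorm: "summable (\<lambda>k. norm (of_real (a k) * cis (real k * t) :: complex))" for t
    using sa a0 by (simp add: norm_mult)
  have bnd: "cmod (F t - FN N t) \<le> tl N" for t N
  proof -
    let ?f = "\<lambda>k. of_real (a k) * cis (real k * t) :: complex"
    have sf: "summable ?f" using sF[of t] by (simp add: sums_summable)
    have "F t = suminf ?f" using sF[of t] by (simp add: sums_iff)
    then have "F t - FN N t = (\<Sum>k. ?f (k + N))"
      unfolding FN_def using suminf_minus_initial_segment[OF sf, of N] by simp
    also have "cmod \<dots> \<le> (\<Sum>k. norm (?f (k + N)))"
      by (rule summable_norm) (use sa a0 in \<open>simp add: norm_mult summable_iff_shift\<close>)
    also have "\<dots> = tl N" unfolding tl_def using a0 by (simp add: norm_mult)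
    finally show ?thesis .
  qed
  have bFN: "cmod (FN N t) \<le> A" for N t
  proof -
    have "cmod (FN N t) \<le> (\<Sum>k<N. cmod (of_real (a k) * cis (real k * t)))"
      unfolding FN_def by (rule norm_sum)
    also have "\<dots> = (\<Sum>k<N. a k)" using a0 by (simp add: norm_mult)
    also have "\<dots> \<le> A" unfolding A_def using sa a0 by (intro sum_le_suminf) auto
    finally show ?thesis .
  qed
  have bF: "cmod (F t) \<le> A" for t
  proof -
    let ?f = "\<lambda>k. of_real (a k) * cis (real k * t) :: complex"
    have "F t = suminf ?f" using sF[of t] by (simp add: sums_iff)
    then have "cmod (F t) \<le> (\<Sum>k. norm (?f k))" using summable_norm[OF snorm[of t]] by simp
    also have "\<dots> = A" unfolding A_def using a0 by (simp add: norm_mult)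
    finally show ?thesis .
  qed
  have dif: "\<bar>(cmod (FN N t))^2 - (cmod (F t))^2\<bar> \<le> 2*A*tl N" for N t
  proof -
    have "\<bar>(cmod (FN N t))^2 - (cmod (F t))^2\<bar> = \<bar>cmod (FN N t) - cmod (F t)\<bar> * (cmod (FN N t) + cmod (F t))"
    proof -
      have "(cmod (FN N t))^2 - (cmod (F t))^2 = (cmod (FN N t) - cmod (F t)) * (cmod (FN N t) + cmod (F t))"
        by (simp add: power2_eq_square algebra_simps)
      then show ?thesis by (simp add: abs_mult)
    qed
    also have "\<dots> \<le> tl N * (2*A)"
    proof (rule mult_mono)
      have "\<bar>cmod (FN N t) - cmod (F t)\<bar> \<le> cmod (FN N t - F t)" by (rule norm_triangle_ineq3)
      also have "\<dots> = cmod (F t - FN N t)" by (simp add: norm_minus_commute)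
      finally show "\<bar>cmod (FN N t) - cmod (F t)\<bar> \<le> tl N" using bnd[of t N] by linarith
      show "cmod (FN N t) + cmod (F t) \<le> 2*A" using bFN[of N t] bF[of t] by linarith
    qed (use bnd[of t N] in \<open>auto simp: A0 intro: order_trans[OF norm_ge_zero]\<close>)
    finally show ?thesis by (simp add: mult_ac)
  qed
  have intFN: "((\<lambda>t. (cmod (FN N t))^2) has_integral (2*pi*(\<Sum>k<N. (a k)^2))) {0..2*pi}" for N
    unfolding FN_def by (rule integral_partial)
  have intF: "((\<lambda>t. (cmod (F t))^2) has_integral I) {0..2*pi}"
    unfolding I_def using cF by (intro integrable_integral integrable_continuous_interval)
  have est: "norm (2*pi*(\<Sum>k<N. (a k)^2) - I) \<le> 2*pi*(2*A*tl N)" for N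
  proof -
    have i1: "((\<lambda>t. (cmod (FN N t))^2 - (cmod (F t))^2) has_integral (2*pi*(\<Sum>k<N. (a k)^2) - I)) {0..2*pi}"
      by (intro has_integral_diff intFN intF)
    have B0: "0 \<le> 2*A*tl N" using dif[of N 0] by linarith
    have "norm (2*pi*(\<Sum>k<N. (a k)^2) - I) \<le> 2*A*tl N * Henstock_Kurzweil_Integration.content {0..2*pi}"
      by (rule has_integral_bound_real[OF B0 finite.emptyI i1]) (use dif in auto)
    then show ?thesis by (simp add: mult_ac)
  qed
  have "(\<lambda>N. 2*pi*(\<Sum>k<N. (a k)^2) - I) \<longlonglongrightarrow> 0"
  proof (rule Lim_null_comparison)
    show "\<forall>\<^sub>F N in sequentially. norm (2*pi*(\<Sum>k<N. (a k)^2) - I) \<le> 2*pi*(2*A*tl N)"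
      using est by simp
    show "(\<lambda>N. 2*pi*(2*A*tl N)) \<longlonglongrightarrow> 0"
      using tendsto_mult_left[OF tl0, of "2*pi*(2*A)"] by (simp add: mult_ac)
  qed
  then have "(\<lambda>N. (2*pi*(\<Sum>k<N. (a k)^2) - I) / (2*pi) + I/(2*pi)) \<longlonglongrightarrow> 0 / (2*pi) + I/(2*pi)"
    by (intro tendsto_intros) auto
  then have "(\<lambda>N. (\<Sum>k<N. (a k)^2)) \<longlonglongrightarrow> I/(2*pi)"
    by (simp add: field_simps)
  then show ?thesis unfolding sums_def I_def .
qed



definition Yf :: "real \<Rightarrow> real \<Rightarrow> real" where "Yf c x = x*(1 + c*x)"
definition Uf :: "real \<Rightarrow> real" where "Uf t = 2*(1 - cos t)"

lemma Uf_bounds: "0 \<le> Uf t" "Uf t \<le> 4"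
proof -
  show "0 \<le> Uf t" using cos_le_one[of t] unfolding Uf_def by smt
  show "Uf t \<le> 4" using cos_ge_minus_one[of t] unfolding Uf_def by smt
qed

lemma Uf_deriv: "(Uf has_real_derivative 2 * sin t) (at t)"
  unfolding Uf_def by (auto intro!: derivative_eq_intros)

lemma Yf_deriv: "((Yf c) has_real_derivative 1 + 2*c*x) (at x)"
  unfolding Yf_def by (auto intro!: derivative_eq_intros simp: algebra_simps)

lemma YU_deriv: "((\<lambda>x. Yf c x * Uf t) has_real_derivative (1 + 2*c*x) * Uf t) (at x)"
  unfolding Yf_def by (auto intro!: derivative_eq_intros simp: algebra_simps)

lemma cont_YU: "continuous_on S (\<lambda>z. Yf c (fst z) * Uf (snd z))"
  unfolding Yf_def Uf_def by (intro continuous_intros)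

locale gen =
  fixes n c :: real and psi psi1 psi2 :: "real \<Rightarrow> real" and J V :: "real set"
  assumes npos: "n > 0"
    and J_open: "open J" and J_conv: "convex J" and V_open: "open V"
    and YU_in: "\<And>x t. x \<in> J \<Longrightarrow> Yf c x * Uf t \<in> V"
    and d0: "\<And>v. v \<in> V \<Longrightarrow> (psi has_real_derivative psi1 v) (at v)"
    and d1: "\<And>v. v \<in> V \<Longrightarrow> (psi1 has_real_derivative psi2 v) (at v)"
    and c2: "continuous_on V psi2"
    and r1: "\<And>v. v \<in> V \<Longrightarrow> (1 + c * v) * psi1 v = - n * psi v"
    and r2: "\<And>v. v \<in> V \<Longrightarrow> (1 + c * v) * psi2 v = - (n+c) * psi1 v"
    and sgn1: "\<And>v. v \<in> V \<Longrightarrow> 1 + c * v > 0 \<Longrightarrow> psi1 v < 0"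
    and sgn2: "\<And>v. v \<in> V \<Longrightarrow> 1 + c * v \<ge> 0 \<Longrightarrow> psi1 v \<le> 0 \<and> psi2 v \<ge> 0"
begin

definition Ph where "Ph x t = psi (Yf c x * Uf t)"
definition Phx where "Phx x t = psi1 (Yf c x * Uf t) * Uf t * (1 + 2*c*x)"
definition Phxx where "Phxx x t = psi2 (Yf c x * Uf t) * (Uf t)^2 * (1 + 2*c*x)^2 + psi1 (Yf c x * Uf t) * Uf t * (2*c)"
definition Sg where "Sg x = integral {0..2*pi} (Ph x) / (2*pi)"
definition S1 where "S1 x = integral {0..2*pi} (Phx x) / (2*pi)"
definition S2 where "S2 x = integral {0..2*pi} (Phxx x) / (2*pi)"

lemma c0: "continuous_on V psi"
  using d0 by (intro continuous_at_imp_continuous_on) (meson DERIV_isCont)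
lemma c1: "continuous_on V psi1"
  using d1 by (intro continuous_at_imp_continuous_on) (meson DERIV_isCont)

lemma contf:
  assumes "continuous_on V f"
  shows "continuous_on (J \<times> S) (\<lambda>z. f (Yf c (fst z) * Uf (snd z)))"
  by (rule continuous_on_compose2[OF assms cont_YU]) (auto simp: YU_in)

lemma cont_Ph: "continuous_on (J \<times> S) (\<lambda>(x, t). Ph x t)"
proof -
  have "(\<lambda>(x, t). Ph x t) = (\<lambda>z. psi (Yf c (fst z) * Uf (snd z)))" by (auto simp: Ph_def)
  then show ?thesis using contf[OF c0] by simp
qed

lemma cont_Phx: "continuous_on (J \<times> S) (\<lambda>(x, t). Phx x t)"
proof -
  have "(\<lambda>(x, t). Phx x t) = (\<lambda>z. psi1 (Yf c (fst z) * Uf (snd z)) * Uf (snd z) * (1 + 2*c*fst z))"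
    by (auto simp: Phx_def)
  then show ?thesis using contf[OF c1] unfolding Uf_def by (auto intro!: continuous_intros)
qed

lemma cont_Phxx: "continuous_on (J \<times> S) (\<lambda>(x, t). Phxx x t)"
proof -
  have "(\<lambda>(x, t). Phxx x t) = (\<lambda>z. psi2 (Yf c (fst z) * Uf (snd z)) * (Uf (snd z))^2 * (1+2*c*fst z)^2
      + psi1 (Yf c (fst z) * Uf (snd z)) * Uf (snd z) * (2*c))"
    by (auto simp: Phxx_def)
  then show ?thesis using contf[OF c1] contf[OF c2] unfolding Uf_def by (auto intro!: continuous_intros)
qed

lemma cont_t:
  assumes "continuous_on (J \<times> S) (\<lambda>(x, t). f x t)" "x \<in> J"
  shows "continuous_on S (f x)"
proof -
  have "continuous_on S ((\<lambda>(x, t). f x t) \<circ> (\<lambda>t. (x, t)))"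
    by (rule continuous_on_compose) (auto intro!: continuous_intros continuous_on_subset[OF assms(1)] simp: assms(2))
  then show ?thesis by (simp add: o_def)
qed

lemma dPh: "x \<in> J \<Longrightarrow> ((\<lambda>x. Ph x t) has_real_derivative Phx x t) (at x)"
  unfolding Ph_def Phx_def
  by (rule DERIV_cong[OF DERIV_chain2[OF d0[OF YU_in] YU_deriv]]) (simp_all add: algebra_simps)

lemma dPhx: "x \<in> J \<Longrightarrow> ((\<lambda>x. Phx x t) has_real_derivative Phxx x t) (at x)"
proof -
  assume x: "x \<in> J"
  have a: "((\<lambda>x. psi1 (Yf c x * Uf t)) has_real_derivative psi2 (Yf c x * Uf t) * ((1 + 2*c*x) * Uf t)) (at x)"
    using DERIV_chain2[OF d1[OF YU_in[OF x]] YU_deriv] by simp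
  have "((\<lambda>x. psi1 (Yf c x * Uf t) * Uf t * (1 + 2*c*x)) has_real_derivative
     psi2 (Yf c x * Uf t) * ((1 + 2*c*x) * Uf t) * Uf t * (1 + 2*c*x) + psi1 (Yf c x * Uf t) * Uf t * (2*c)) (at x)"
    by (auto intro!: derivative_eq_intros a)
  then show ?thesis unfolding Phx_def Phxx_def by (rule DERIV_cong) (simp add: power2_eq_square algebra_simps)
qed

lemma leib:
  assumes fx: "\<And>x t. x \<in> J \<Longrightarrow> ((\<lambda>x. f x t) has_real_derivative fx x t) (at x)"
    and cf: "continuous_on (J \<times> {0..2*pi}) (\<lambda>(x, t). f x t)"
    and cfx: "continuous_on (J \<times> {0..2*pi}) (\<lambda>(x, t). fx x t)"
    and x0: "x0 \<in> J"
  shows "((\<lambda>x. integral {0..2*pi} (f x) / (2*pi)) has_real_derivative integral {0..2*pi} (fx x0) / (2*pi)) (at x0)"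
proof -
  have "((\<lambda>x. integral (cbox 0 (2*pi)) (f x)) has_field_derivative integral (cbox 0 (2*pi)) (fx x0)) (at x0 within J)"
  proof (rule leibniz_rule_field_derivative)
    show "\<And>x t. x \<in> J \<Longrightarrow> t \<in> cbox 0 (2 * pi) \<Longrightarrow> ((\<lambda>x. f x t) has_field_derivative fx x t) (at x within J)"
      using fx by (simp add: has_field_derivative_at_within)
    show "\<And>x. x \<in> J \<Longrightarrow> f x integrable_on cbox 0 (2 * pi)"
      using cont_t[OF cf] by (auto intro!: integrable_continuous_interval)
    show "continuous_on (J \<times> cbox 0 (2 * pi)) (\<lambda>(x, t). fx x t)" using cfx by simp
  qed (use x0 J_conv in auto)
  then have "((\<lambda>x. integral {0..2*pi} (f x)) has_field_derivative integral {0..2*pi} (fx x0)) (at x0)"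
    using at_within_open[OF x0 J_open] by simp
  then show ?thesis by (intro DERIV_cdivide)
qed

lemma dSg: "x \<in> J \<Longrightarrow> (Sg has_real_derivative S1 x) (at x)"
  unfolding Sg_def[abs_def] S1_def by (rule leib[OF dPh cont_Ph cont_Phx])

lemma dS1: "x \<in> J \<Longrightarrow> (S1 has_real_derivative S2 x) (at x)"
  unfolding S1_def[abs_def] S2_def by (rule leib[OF dPhx cont_Phx cont_Phxx])

lemma ode_pt:
  fixes P P1 P2 x t :: real
  assumes e1: "(1 + c * (Yf c x * Uf t)) * P1 = - n * P"
    and e2: "(1 + c * (Yf c x * Uf t)) * P2 = - (n+c) * P1"
  shows "Yf c x * (1 + 2*c*x) * (P2 * (Uf t)^2 * (1 + 2*c*x)^2 + P1 * Uf t * (2*c))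
     + (4*(n+c)*Yf c x + 1) * (P1 * Uf t * (1 + 2*c*x)) + 2*n*(1 + 2*c*x) * P
     = -2*(1 + 2*c*x)*(cos t * P1 + sin t * P2 * (Yf c x * (2 * sin t)))"
proof -
  have e3: "sin t ^ 2 + cos t ^ 2 - 1 = 0" by simp
  have e1': "(1 + c * (Yf c x * Uf t)) * P1 + n * P = 0" using e1 by simp
  have e2': "(1 + c * (Yf c x * Uf t)) * P2 + (n+c) * P1 = 0" using e2 by (simp add: algebra_simps)
  have "Yf c x * (1 + 2*c*x) * (P2 * (Uf t)^2 * (1 + 2*c*x)^2 + P1 * Uf t * (2*c))
     + (4*(n+c)*Yf c x + 1) * (P1 * Uf t * (1 + 2*c*x)) + 2*n*(1 + 2*c*x) * P
     - (-2*(1 + 2*c*x)*(cos t * P1 + sin t * P2 * (Yf c x * (2 * sin t))))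
     = (1 + 2*c*x) * (4 * Yf c x * Uf t * ((1 + c * (Yf c x * Uf t)) * P2 + (n+c) * P1)
        + 2 * ((1 + c * (Yf c x * Uf t)) * P1 + n * P) + 4 * Yf c x * P2 * (sin t ^ 2 + cos t ^ 2 - 1))"
    unfolding Yf_def Uf_def by algebra
  also have "\<dots> = 0" by (simp only: e1' e2' e3) simp
  finally show ?thesis by simp
qed

lemma ode:
  assumes x: "x \<in> J"
  shows "Yf c x * (1 + 2*c*x) * S2 x + (4*(n+c)*Yf c x + 1) * S1 x + 2*n*(1 + 2*c*x) * Sg x = 0"
proof -
  define w where "w = 1 + 2*c*x"
  define Y where "Y = Yf c x"
  define K where "K t = -2*w*(sin t * psi1 (Y * Uf t))" for t
  define K' where "K' t = -2*w*(cos t * psi1 (Y * Uf t) + sin t * psi2 (Y * Uf t) * (Y * (2 * sin t)))" for t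
  have dK: "(K has_real_derivative K' t) (at t)" for t
  proof -
    have a: "((\<lambda>t. psi1 (Y * Uf t)) has_real_derivative psi2 (Y * Uf t) * (Y * (2 * sin t))) (at t)"
      by (rule DERIV_chain2[OF d1]) (auto simp: Y_def YU_in x intro!: derivative_eq_intros Uf_deriv)
    have b: "((\<lambda>t. sin t * psi1 (Y * Uf t)) has_real_derivative cos t * psi1 (Y * Uf t) + sin t * (psi2 (Y * Uf t) * (Y * (2 * sin t)))) (at t)"
      by (rule DERIV_cong[OF DERIV_mult[OF DERIV_sin a]]) simp
    show ?thesis unfolding K_def K'_def
      by (rule DERIV_cong[OF DERIV_cmult[OF b]]) (simp add: algebra_simps)
  qed
  have intK: "(K' has_integral (K (2*pi) - K 0)) {0..2*pi}"
    by (rule fundamental_theorem_of_calculus)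
       (auto simp: has_real_derivative_iff_has_vector_derivative[symmetric] intro: has_field_derivative_at_within dK)
  then have intK0: "(K' has_integral 0) {0..2*pi}" by (simp add: K_def)
  have pt: "Y*w*Phxx x t + (4*(n+c)*Y+1)*Phx x t + 2*n*w*Ph x t = K' t" for t
    unfolding Y_def w_def Phxx_def Phx_def Ph_def K'_def
    by (rule ode_pt[OF r1[OF YU_in[OF x]] r2[OF YU_in[OF x]]])
  have i0: "(Ph x has_integral integral {0..2*pi} (Ph x)) {0..2*pi}"
    using cont_t[OF cont_Ph x] by (intro integrable_integral integrable_continuous_interval)
  have i1: "(Phx x has_integral integral {0..2*pi} (Phx x)) {0..2*pi}"
    using cont_t[OF cont_Phx x] by (intro integrable_integral integrable_continuous_interval)
  have i2: "(Phxx x has_integral integral {0..2*pi} (Phxx x)) {0..2*pi}"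
    using cont_t[OF cont_Phxx x] by (intro integrable_integral integrable_continuous_interval)
  have "((\<lambda>t. Y*w*Phxx x t + (4*(n+c)*Y+1)*Phx x t + 2*n*w*Ph x t) has_integral
     (Y*w*integral {0..2*pi} (Phxx x) + (4*(n+c)*Y+1)*integral {0..2*pi} (Phx x) + 2*n*w*integral {0..2*pi} (Ph x))) {0..2*pi}"
    by (intro has_integral_add has_integral_mult_right i0 i1 i2)
  moreover have "((\<lambda>t. Y*w*Phxx x t + (4*(n+c)*Y+1)*Phx x t + 2*n*w*Ph x t) has_integral 0) {0..2*pi}"
  proof -
    have "(\<lambda>t. Y*w*Phxx x t + (4*(n+c)*Y+1)*Phx x t + 2*n*w*Ph x t) = K'" using pt by (intro ext) simp
    then show ?thesis using intK0 by simp
  qed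
  ultimately have "Y*w*integral {0..2*pi} (Phxx x) + (4*(n+c)*Y+1)*integral {0..2*pi} (Phx x) + 2*n*w*integral {0..2*pi} (Ph x) = 0"
    using has_integral_unique by blast
  then have "(Y*w*integral {0..2*pi} (Phxx x) + (4*(n+c)*Y+1)*integral {0..2*pi} (Phx x) + 2*n*w*integral {0..2*pi} (Ph x)) / (2*pi) = 0"
    by simp
  then show ?thesis unfolding S2_def S1_def Sg_def Y_def[symmetric] w_def[symmetric]
    by (simp add: field_simps)
qed

lemma xfacts:
  assumes "0 \<le> x" "c < 0 \<Longrightarrow> x \<le> -1/c"
  shows "Yf c x \<ge> 0" "c * Yf c x \<le> 0 \<or> c \<ge> 0" "1 + 4 * c * Yf c x = (1 + 2*c*x)^2"
proof -
  have cx: "1 + c*x \<ge> 0"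
  proof (cases "c < 0")
    case True
    then have "c * x \<ge> c * (-1/c)" using assms by (intro mult_left_mono_neg) auto
    then show ?thesis using True by simp
  next
    case False then show ?thesis using assms by simp
  qed
  show "Yf c x \<ge> 0" unfolding Yf_def using cx assms by simp
  then show "c * Yf c x \<le> 0 \<or> c \<ge> 0" by (cases "c \<ge> 0") (auto simp: mult_nonpos_nonneg)
  show "1 + 4 * c * Yf c x = (1 + 2*c*x)^2" unfolding Yf_def by (simp add: power2_eq_square algebra_simps)
qed

lemma q_nonneg:
  assumes "0 \<le> x" "c < 0 \<Longrightarrow> x \<le> -1/c" "0 \<le> U" "U \<le> 4"
  shows "1 + c * (Yf c x * U) \<ge> (1 + 2*c*x)^2 \<or> (c \<ge> 0 \<and> 1 + c * (Yf c x * U) \<ge> 1)"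
proof (cases "c \<ge> 0")
  case True
  then show ?thesis using xfacts[OF assms(1,2)] assms(3) by auto
next
  case False
  then have cY: "c * Yf c x \<le> 0" using xfacts[OF assms(1,2)] by auto
  have "c * Yf c x * U \<ge> c * Yf c x * 4" using cY assms(4) by (intro mult_left_mono_neg) auto
  then show ?thesis using xfacts(3)[OF assms(1,2)] by (simp add: mult_ac)
qed

lemma Z_nonneg:
  assumes x: "0 \<le> x" "c < 0 \<Longrightarrow> x \<le> -1/c" and U: "0 \<le> U" "U \<le> 4"
    and V: "Yf c x * U \<in> V"
  shows "psi2 (Yf c x * U) * (1 + c * Yf c x * (8 + U) / 3) + (2*c/3) * psi1 (Yf c x * U) \<ge> 0"
proof -
  define Y where "Y = Yf c x"
  define P1 where "P1 = psi1 (Y * U)"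
  define P2 where "P2 = psi2 (Y * U)"
  have Y0: "Y \<ge> 0" using xfacts[OF x] by (simp add: Y_def)
  have q: "1 + c * (Y * U) \<ge> 0" using q_nonneg[OF x U] by (auto simp: Y_def intro: order_trans[OF zero_le_power2])
  have s: "P1 \<le> 0" "P2 \<ge> 0" using sgn2[OF V[folded Y_def] q] by (auto simp: P1_def P2_def)
  have "P2 * (1 + c * Y * (8 + U) / 3) + (2*c/3) * P1 \<ge> 0"
  proof (cases c "0::real" rule: linorder_cases)
    case equal then show ?thesis using s by simp
  next
    case less
    have cY: "c * Y \<le> 0" using less Y0 by (simp add: mult_nonpos_nonneg)
    have "c * Y * (8 + U) / 3 \<ge> c * Y * 4"
    proof -
      have "c * Y * ((8 + U) / 3) \<ge> c * Y * 4" using cY U by (intro mult_left_mono_neg) auto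
      then show ?thesis by simp
    qed
    moreover have "1 + 4 * c * Y \<ge> 0" using xfacts(3)[OF x] by (simp add: Y_def)
    ultimately have a: "1 + c * Y * (8 + U) / 3 \<ge> 0" by simp
    have "P2 * (1 + c * Y * (8 + U) / 3) \<ge> 0" using a s by simp
    moreover have "(2*c/3) * P1 \<ge> 0" using less s by (simp add: mult_nonpos_nonpos)
    ultimately show ?thesis by linarith
  next
    case greater
    have qp: "1 + c * (Y * U) > 0" using greater Y0 U by (simp add: add_pos_nonneg)
    have e: "(1 + c * (Y * U)) * P2 = - (n+c) * P1" unfolding P1_def P2_def using r2[OF V[folded Y_def]] .
    have br: "(n+c) * (1 + c * Y * (8 + U) / 3) - (2*c/3) * (1 + c * (Y * U)) \<ge> 0"
    proof -
      have cY: "c * Y \<ge> 0" using greater Y0 by simp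
      have "(n + c) * (8 + U) \<ge> c * (8 + U)" using npos U by (intro mult_right_mono) auto
      also have "c * (8 + U) \<ge> 2 * c * U" using greater U by (simp add: algebra_simps)
      finally have h: "(n + c) * (8 + U) - 2 * c * U \<ge> 0" by simp
      have "(n+c) * (1 + c * Y * (8 + U) / 3) - (2*c/3) * (1 + c * (Y * U))
          = (n + c - 2*c/3) + (c * Y / 3) * ((n + c) * (8 + U) - 2 * c * U)"
        by (simp add: field_simps)
      moreover have "(c * Y / 3) * ((n + c) * (8 + U) - 2 * c * U) \<ge> 0" using cY h by simp
      moreover have "n + c - 2*c/3 \<ge> 0" using npos greater by simp
      ultimately show ?thesis by linarith
    qed
    have "(1 + c * (Y * U)) * (P2 * (1 + c * Y * (8 + U) / 3) + (2*c/3) * P1)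
        = (- P1) * ((n+c) * (1 + c * Y * (8 + U) / 3) - (2*c/3) * (1 + c * (Y * U)))"
    proof -
      have "(1 + c * (Y * U)) * (P2 * (1 + c * Y * (8 + U) / 3) + (2*c/3) * P1)
          = ((1 + c * (Y * U)) * P2) * (1 + c * Y * (8 + U) / 3) + (2*c/3) * P1 * (1 + c * (Y * U))"
        by (simp add: algebra_simps)
      also have "\<dots> = (- P1) * ((n+c) * (1 + c * Y * (8 + U) / 3) - (2*c/3) * (1 + c * (Y * U)))"
        unfolding e by (simp add: field_simps)
      finally show ?thesis .
    qed
    moreover have "(- P1) * ((n+c) * (1 + c * Y * (8 + U) / 3) - (2*c/3) * (1 + c * (Y * U))) \<ge> 0"
      using s br by (intro mult_nonneg_nonneg) auto
    ultimately have "(1 + c * (Y * U)) * (P2 * (1 + c * Y * (8 + U) / 3) + (2*c/3) * P1) \<ge> 0" by simp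
    then show ?thesis using qp by (simp add: zero_le_mult_iff)
  qed
  then show ?thesis by (simp add: P1_def P2_def Y_def)
qed

lemma conv_pt:
  fixes P1 P2 x t :: real
  shows "P2 * (Uf t)^2 * (1 + 2*c*x)^2 + P1 * Uf t * (2*c)
     + (-2*c/3) * (cos t * Uf t * P1 + sin t * (2 * sin t) * P1 + sin t * Uf t * (P2 * (Yf c x * (2 * sin t))))
     = (Uf t)^2 * (P2 * (1 + c * Yf c x * (8 + Uf t) / 3) + (2*c/3) * P1)
       - (4*c/3) * (P1 + Yf c x * Uf t * P2) * (sin t ^ 2 + cos t ^ 2 - 1)"
  unfolding Yf_def Uf_def by algebra

lemma S2_nonneg:
  assumes x: "x \<in> J" "0 \<le> x" "c < 0 \<Longrightarrow> x \<le> -1/c"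
  shows "S2 x \<ge> 0"
proof -
  define Y where "Y = Yf c x"
  define H where "H t = sin t * Uf t * psi1 (Y * Uf t)" for t
  define H' where "H' t = cos t * Uf t * psi1 (Y * Uf t) + sin t * (2 * sin t) * psi1 (Y * Uf t)
     + sin t * Uf t * (psi2 (Y * Uf t) * (Y * (2 * sin t)))" for t
  have dH: "(H has_real_derivative H' t) (at t)" for t
  proof -
    have a: "((\<lambda>t. psi1 (Y * Uf t)) has_real_derivative psi2 (Y * Uf t) * (Y * (2 * sin t))) (at t)"
      by (rule DERIV_chain2[OF d1]) (auto simp: Y_def YU_in x intro!: derivative_eq_intros Uf_deriv)
    show ?thesis unfolding H_def H'_def
      by (rule DERIV_cong[OF DERIV_mult[OF DERIV_mult[OF DERIV_sin Uf_deriv] a]]) (simp add: algebra_simps)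
  qed
  have intH: "(H' has_integral (H (2*pi) - H 0)) {0..2*pi}"
    by (rule fundamental_theorem_of_calculus)
       (auto simp: has_real_derivative_iff_has_vector_derivative[symmetric] intro: has_field_derivative_at_within dH)
  then have intH0: "(H' has_integral 0) {0..2*pi}" by (simp add: H_def)
  have i2: "(Phxx x has_integral integral {0..2*pi} (Phxx x)) {0..2*pi}"
    using cont_t[OF cont_Phxx x(1)] by (intro integrable_integral integrable_continuous_interval)
  have "((\<lambda>t. Phxx x t + (-2*c/3) * H' t) has_integral (integral {0..2*pi} (Phxx x) + (-2*c/3) * 0)) {0..2*pi}"
    by (intro has_integral_add has_integral_mult_right i2 intH0)
  moreover have "Phxx x t + (-2*c/3) * H' t \<ge> 0" for t
  proof -
    have "Phxx x t + (-2*c/3) * H' t = (Uf t)^2 * (psi2 (Y * Uf t) * (1 + c * Y * (8 + Uf t) / 3) + (2*c/3) * psi1 (Y * Uf t))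
       - (4*c/3) * (psi1 (Y * Uf t) + Y * Uf t * psi2 (Y * Uf t)) * (sin t ^ 2 + cos t ^ 2 - 1)"
      unfolding Phxx_def H'_def Y_def by (rule conv_pt)
    also have "\<dots> = (Uf t)^2 * (psi2 (Y * Uf t) * (1 + c * Y * (8 + Uf t) / 3) + (2*c/3) * psi1 (Y * Uf t))"
      by simp
    also have "\<dots> \<ge> 0"
      using Z_nonneg[OF x(2,3) Uf_bounds YU_in[OF x(1)]] unfolding Y_def by simp
    finally show ?thesis .
  qed
  ultimately have "integral {0..2*pi} (Phxx x) + (-2*c/3) * 0 \<ge> 0"
    by (rule has_integral_nonneg)
  then show ?thesis unfolding S2_def by simp
qed

definition M where "M x = integral {0..2*pi} (\<lambda>t. psi1 (Yf c x * Uf t) * Uf t) / (2*pi)"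

lemma S1_M: "S1 x = (1 + 2*c*x) * M x"
proof -
  have "Phx x = (\<lambda>t. (1 + 2*c*x) * (psi1 (Yf c x * Uf t) * Uf t))" by (auto simp: Phx_def)
  then show ?thesis unfolding S1_def M_def by simp
qed

lemma M_neg:
  assumes x: "x \<in> J" "0 \<le> x" "c < 0 \<Longrightarrow> x \<le> -1/c" and w: "1 + 2*c*x \<noteq> 0"
  shows "M x < 0"
proof -
  define g where "g t = - (psi1 (Yf c x * Uf t) * Uf t)" for t
  have cg: "continuous_on (cbox 0 (2*pi)) g"
  proof -
    have "continuous_on {0..2*pi} (\<lambda>t. Yf c x * Uf t)"
      unfolding Uf_def by (intro continuous_intros)
    then have "continuous_on {0..2*pi} (\<lambda>t. psi1 (Yf c x * Uf t))"
      by (rule continuous_on_compose2[OF c1]) (use YU_in[OF x(1)] in auto)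
    then show ?thesis unfolding g_def Uf_def by (auto intro!: continuous_intros)
  qed
  have g0: "g t \<ge> 0" for t
  proof -
    have q: "1 + c * (Yf c x * Uf t) \<ge> 0" using q_nonneg[OF x(2,3) Uf_bounds[of t]] zero_le_power2[of "1+2*c*x"] by linarith
    then have "psi1 (Yf c x * Uf t) \<le> 0" using sgn2[OF YU_in[OF x(1)] q] by simp
    then show ?thesis unfolding g_def using Uf_bounds[of t] by (simp add: mult_nonpos_nonneg)
  qed
  have gpi: "g pi > 0"
  proof -
    have U: "Uf pi = 4" by (simp add: Uf_def)
    have "1 + c * (Yf c x * 4) = (1 + 2*c*x)^2" using xfacts(3)[OF x(2,3)] by (simp add: mult_ac)
    also have "\<dots> > 0" using w by simp
    finally have pos: "0 < 1 + c * (Yf c x * Uf pi)" using U by simp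
    have "psi1 (Yf c x * Uf pi) < 0" by (rule sgn1[OF YU_in[OF x(1)] pos])
    then show ?thesis unfolding g_def U by simp
  qed
  have "integral (cbox 0 (2*pi)) g \<noteq> 0"
  proof
    assume "integral (cbox 0 (2*pi)) g = 0"
    then have "\<forall>t \<in> cbox 0 (2*pi). g t = 0"
      using integral_cbox_eq_0_iff[OF cg] g0 pi_gt_zero by (auto simp: cbox_interval box_real)
    then show False using gpi pi_gt_zero by (auto simp: cbox_interval)
  qed
  moreover have "integral (cbox 0 (2*pi)) g \<ge> 0"
    using g0 cg by (intro integral_nonneg integrable_continuous) auto
  ultimately have "integral {0..2*pi} g > 0" by (simp add: cbox_interval)
  moreover have "integral {0..2*pi} g = - integral {0..2*pi} (\<lambda>t. psi1 (Yf c x * Uf t) * Uf t)"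
    unfolding g_def by (rule integral_neg)
  ultimately show ?thesis unfolding M_def by (simp add: divide_neg_pos)
qed

lemma main:
  assumes IJ: "Ic c \<subseteq> J" and sm: "\<And>x. x \<in> Ic c \<Longrightarrow> (\<lambda>k. (p n c k x)^2) sums Sg x"
  shows "concave_on (Ic c) (T n c)
    \<and> (c \<ge> 0 \<longrightarrow> strict_mono_on {0..} (T n c))
    \<and> (c < 0 \<longrightarrow> strict_mono_on {0 .. -1/(2*c)} (T n c)
                 \<and> strict_antimono_on {-1/(2*c) .. -1/c} (T n c))
    \<and> (\<exists>u1 u2. \<forall>x\<in>Ic c.
          (T n c has_real_derivative u1 x) (at x within Ic c)
        \<and> (u1 has_real_derivative u2 x) (at x within Ic c)
        \<and> x*(1 + c*x)*(1 + 2*c*x) * u2 x + (4*(n+c)*x*(1 + c*x) + 1) * u1 x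
            + 2*n*(1 + 2*c*x) * T n c x = 2*n*(1 + 2*c*x))"
proof -
  have Teq: "T n c x = 1 - Sg x" if "x \<in> Ic c" for x
    using sm[OF that] unfolding T_def by (simp add: sums_iff)
  have Ic_iff: "x \<in> Ic c \<longleftrightarrow> 0 \<le> x \<and> (c < 0 \<longrightarrow> x \<le> -1/c)" for x
    by (auto simp: Ic_def)
  have cvx: "convex (Ic c)" by (auto simp: Ic_def)
  have dF: "x \<in> J \<Longrightarrow> ((\<lambda>x. 1 - Sg x) has_real_derivative - S1 x) (at x)" for x
    by (auto intro!: derivative_eq_intros dSg)
  have dF1: "x \<in> J \<Longrightarrow> ((\<lambda>x. - S1 x) has_real_derivative - S2 x) (at x)" for x
    by (auto intro!: derivative_eq_intros dS1)
  have contF: "continuous_on {a..b} (\<lambda>x. 1 - Sg x)" if "{a..b} \<subseteq> J" for a b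
    using dF that by (intro continuous_at_imp_continuous_on) (meson DERIV_isCont subsetD)
  have "convex_on (Ic c) (\<lambda>x. Sg x - 1)"
  proof (rule f''_ge0_imp_convex[OF cvx])
    fix x assume x: "x \<in> Ic c"
    then have xJ: "x \<in> J" using IJ by auto
    show "((\<lambda>x. Sg x - 1) has_real_derivative S1 x) (at x)"
      by (auto intro!: derivative_eq_intros dSg xJ)
    show "(S1 has_real_derivative S2 x) (at x)" by (rule dS1[OF xJ])
    show "0 \<le> S2 x" using x xJ by (intro S2_nonneg) (auto simp: Ic_iff)
  qed
  then have conc: "concave_on (Ic c) (T n c)"
    unfolding concave_on_def convex_on_def
  proof (intro conjI cvx ballI allI impI; elim conjE)
    fix x y u v :: real
    assume H: "\<forall>x\<in>Ic c. \<forall>y\<in>Ic c. \<forall>u\<ge>0. \<forall>v\<ge>0. u + v = 1 \<longrightarrow>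
               Sg (u *\<^sub>R x + v *\<^sub>R y) - 1 \<le> u * (Sg x - 1) + v * (Sg y - 1)"
      and xy: "x \<in> Ic c" "y \<in> Ic c" "0 \<le> u" "0 \<le> v" "u + v = 1"
    have m: "u *\<^sub>R x + v *\<^sub>R y \<in> Ic c" using convexD[OF cvx xy] .
    show "- T n c (u *\<^sub>R x + v *\<^sub>R y) \<le> u * - T n c x + v * - T n c y"
      using H xy m by (simp add: Teq)
  qed
  have dpos: "\<exists>y. ((\<lambda>x. 1 - Sg x) has_real_derivative y) (at x) \<and> y > 0"
    if "x \<in> Ic c" "1 + 2*c*x > 0" for x
  proof -
    have xJ: "x \<in> J" using that IJ by auto
    have "M x < 0" using that xJ by (intro M_neg) (auto simp: Ic_iff)
    then have "- S1 x > 0" using that by (simp add: S1_M mult_pos_neg)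
    then show ?thesis using dF[OF xJ] by blast
  qed
  have dneg: "\<exists>y. ((\<lambda>x. 1 - Sg x) has_real_derivative y) (at x) \<and> y < 0"
    if "x \<in> Ic c" "1 + 2*c*x < 0" for x
  proof -
    have xJ: "x \<in> J" using that IJ by auto
    have "M x < 0" using that xJ by (intro M_neg) (auto simp: Ic_iff)
    then have "- S1 x < 0" using that by (simp add: S1_M mult_neg_neg)
    then show ?thesis using dF[OF xJ] by blast
  qed
  have mono1: "c \<ge> 0 \<longrightarrow> strict_mono_on {0..} (T n c)"
  proof
    assume c: "c \<ge> 0"
    have I: "Ic c = {0..}" using c by (auto simp: Ic_def)
    show "strict_mono_on {0..} (T n c)"
    proof (rule monotone_onI)
      fix r s :: real assume rs: "r \<in> {0..}" "s \<in> {0..}" "r < s"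
      have "(\<lambda>x. 1 - Sg x) r < (\<lambda>x. 1 - Sg x) s"
      proof (rule DERIV_pos_imp_increasing_open[OF rs(3)])
        fix x assume "r < x" "x < s"
        then have "x \<in> Ic c" "1 + 2*c*x > 0" using rs c I by (auto intro: add_pos_nonneg)
        then show "\<exists>y. ((\<lambda>x. 1 - Sg x) has_real_derivative y) (at x) \<and> y > 0" by (rule dpos)
      next
        show "continuous_on {r..s} (\<lambda>x. 1 - Sg x)" using rs IJ I by (intro contF) auto
      qed
      then show "T n c r < T n c s" using rs I Teq by auto
    qed
  qed
  have mono2: "c < 0 \<longrightarrow> strict_mono_on {0 .. -1/(2*c)} (T n c)
                 \<and> strict_antimono_on {-1/(2*c) .. -1/c} (T n c)"
  proof
    assume c: "c < 0"
    have h: "-1/(2*c) \<le> -1/c" using c by (simp add: divide_simps)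
    have h0: "0 \<le> -1/(2*c)" using c by (simp add: divide_simps)
    have sub1: "{0 .. -1/(2*c)} \<subseteq> Ic c" using c h by (auto simp: Ic_def)
    have sub2: "{-1/(2*c) .. -1/c} \<subseteq> Ic c" using c h h0 by (auto simp: Ic_def)
    have w1: "1 + 2*c*x > 0" if "x < -1/(2*c)" for x
    proof -
      have "2*c*x > 2*c*(-1/(2*c))" using that c by (intro mult_strict_left_mono_neg) auto
      then show ?thesis using c by simp
    qed
    have w2: "1 + 2*c*x < 0" if "x > -1/(2*c)" for x
    proof -
      have "2*c*x < 2*c*(-1/(2*c))" using that c by (intro mult_strict_left_mono_neg) auto
      then show ?thesis using c by simp
    qed
    show "strict_mono_on {0 .. -1/(2*c)} (T n c) \<and> strict_antimono_on {-1/(2*c) .. -1/c} (T n c)"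
    proof
      show "strict_mono_on {0 .. -1/(2*c)} (T n c)"
      proof (rule monotone_onI)
        fix r s :: real assume rs: "r \<in> {0 .. -1/(2*c)}" "s \<in> {0 .. -1/(2*c)}" "r < s"
        have "(\<lambda>x. 1 - Sg x) r < (\<lambda>x. 1 - Sg x) s"
        proof (rule DERIV_pos_imp_increasing_open[OF rs(3)])
          fix x assume "r < x" "x < s"
          then have "x \<in> Ic c" "1 + 2*c*x > 0" using rs sub1 w1 by auto
          then show "\<exists>y. ((\<lambda>x. 1 - Sg x) has_real_derivative y) (at x) \<and> y > 0" by (rule dpos)
        next
          have "{r..s} \<subseteq> {0 .. -1/(2*c)}" using rs by auto
          then have "{r..s} \<subseteq> J" using IJ sub1 by blast
          then show "continuous_on {r..s} (\<lambda>x. 1 - Sg x)" by (rule contF)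
        qed
        moreover have "r \<in> Ic c" "s \<in> Ic c" using rs sub1 by blast+
        ultimately show "T n c r < T n c s" by (simp add: Teq)
      qed
      show "strict_antimono_on {-1/(2*c) .. -1/c} (T n c)"
      proof (rule monotone_onI)
        fix r s :: real assume rs: "r \<in> {-1/(2*c) .. -1/c}" "s \<in> {-1/(2*c) .. -1/c}" "r < s"
        have "(\<lambda>x. 1 - Sg x) r > (\<lambda>x. 1 - Sg x) s"
        proof (rule DERIV_neg_imp_decreasing_open[OF rs(3)])
          fix x assume "r < x" "x < s"
          then have "x \<in> Ic c" "1 + 2*c*x < 0" using rs sub2 w2 by auto
          then show "\<exists>y. ((\<lambda>x. 1 - Sg x) has_real_derivative y) (at x) \<and> y < 0" by (rule dneg)
        next
          have "{r..s} \<subseteq> {-1/(2*c) .. -1/c}" using rs by auto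
          then have "{r..s} \<subseteq> J" using IJ sub2 by blast
          then show "continuous_on {r..s} (\<lambda>x. 1 - Sg x)" by (rule contF)
        qed
        moreover have "r \<in> Ic c" "s \<in> Ic c" using rs sub2 by blast+
        ultimately show "T n c s < T n c r" by (simp add: Teq)
      qed
    qed
  qed
  have odeT: "\<exists>u1 u2. \<forall>x\<in>Ic c.
          (T n c has_real_derivative u1 x) (at x within Ic c)
        \<and> (u1 has_real_derivative u2 x) (at x within Ic c)
        \<and> x*(1 + c*x)*(1 + 2*c*x) * u2 x + (4*(n+c)*x*(1 + c*x) + 1) * u1 x
            + 2*n*(1 + 2*c*x) * T n c x = 2*n*(1 + 2*c*x)"
  proof (intro exI ballI conjI)
    fix x assume x: "x \<in> Ic c"
    then have xJ: "x \<in> J" using IJ by auto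
    show "(T n c has_real_derivative - S1 x) (at x within Ic c)"
      by (rule has_field_derivative_transform_within[OF has_field_derivative_at_within[OF dF[OF xJ]] zero_less_one x])
         (simp add: Teq)
    show "((\<lambda>x. - S1 x) has_real_derivative - S2 x) (at x within Ic c)"
      by (rule has_field_derivative_at_within[OF dF1[OF xJ]])
    have "Yf c x * (1 + 2*c*x) * S2 x + (4*(n+c)*Yf c x + 1) * S1 x + 2*n*(1 + 2*c*x) * Sg x = 0"
      by (rule ode[OF xJ])
    then show "x*(1 + c*x)*(1 + 2*c*x) * (- S2 x) + (4*(n+c)*x*(1 + c*x) + 1) * (- S1 x)
            + 2*n*(1 + 2*c*x) * T n c x = 2*n*(1 + 2*c*x)"
      unfolding Teq[OF x] Yf_def by (simp add: algebra_simps)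
  qed
  show ?thesis using conc mono1 mono2 odeT by blast
qed

end


lemma case_zero:
  fixes n c :: real
  assumes npos: "n > 0" and c: "c = 0"
  shows "concave_on (Ic c) (T n c)
    \<and> (c \<ge> 0 \<longrightarrow> strict_mono_on {0..} (T n c))
    \<and> (c < 0 \<longrightarrow> strict_mono_on {0 .. -1/(2*c)} (T n c)
                 \<and> strict_antimono_on {-1/(2*c) .. -1/c} (T n c))
    \<and> (\<exists>u1 u2. \<forall>x\<in>Ic c.
          (T n c has_real_derivative u1 x) (at x within Ic c)
        \<and> (u1 has_real_derivative u2 x) (at x within Ic c)
        \<and> x*(1 + c*x)*(1 + 2*c*x) * u2 x + (4*(n+c)*x*(1 + c*x) + 1) * u1 x
            + 2*n*(1 + 2*c*x) * T n c x = 2*n*(1 + 2*c*x))"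
proof -
  define psi where "psi v = exp (- n * v)" for v :: real
  define psi1 where "psi1 v = - n * exp (- n * v)" for v :: real
  define psi2 where "psi2 v = n^2 * exp (- n * v)" for v :: real
  interpret G: gen n c psi psi1 psi2 UNIV UNIV
  proof
    fix v :: real
    show "(psi has_real_derivative psi1 v) (at v)" unfolding psi_def psi1_def
      by (auto intro!: derivative_eq_intros)
    show "(psi1 has_real_derivative psi2 v) (at v)" unfolding psi1_def psi2_def
      by (auto intro!: derivative_eq_intros simp: power2_eq_square)
    show "(1 + c * v) * psi1 v = - n * psi v" by (simp add: c psi1_def psi_def)
    show "(1 + c * v) * psi2 v = - (n + c) * psi1 v" by (simp add: c psi1_def psi2_def power2_eq_square)
    show "0 < 1 + c * v \<Longrightarrow> psi1 v < 0" using npos by (simp add: psi1_def)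
    show "0 \<le> 1 + c * v \<Longrightarrow> psi1 v \<le> 0 \<and> 0 \<le> psi2 v" using npos by (simp add: psi1_def psi2_def)
  next
    show "continuous_on UNIV psi2" unfolding psi2_def by (intro continuous_intros)
  qed (use npos in auto)
  have sm: "(\<lambda>k. (p n c k x)^2) sums G.Sg x" if x: "x \<in> Ic c" for x
  proof -
    define a where "a k = (n*x)^k / fact k * exp (- n*x)" for k
    define F where "F t = of_real (exp (- n*x)) * exp (of_real (n*x) * cis t)" for t
    have pa: "p n c k x = a k" for k by (simp add: p_def a_def c)
    have x0: "x \<ge> 0" using x c by (simp add: Ic_def)
    have a0: "a k \<ge> 0" for k using x0 npos by (simp add: a_def)
    have sa: "summable a"
    proof -
      have "(\<lambda>k. (n*x)^k /\<^sub>R fact k) sums exp (n*x)" by (rule exp_converges)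
      then have "summable (\<lambda>k. (n*x)^k / fact k)" by (simp add: sums_summable divide_inverse mult.commute)
      then show ?thesis unfolding a_def by (rule summable_mult2)
    qed
    have sF: "(\<lambda>k. of_real (a k) * cis (real k * t)) sums F t" for t
    proof -
      have "(\<lambda>k. (of_real (n*x) * cis t)^k /\<^sub>R fact k) sums exp (of_real (n*x) * cis t)" by (rule exp_converges)
      then have "(\<lambda>k. of_real (exp (- n*x)) * ((of_real (n*x) * cis t)^k /\<^sub>R fact k)) sums F t"
        unfolding F_def by (rule sums_mult)
      moreover have "of_real (exp (- n*x)) * ((of_real (n*x) * cis t)^k /\<^sub>R fact k) = of_real (a k) * cis (real k * t)" for k
      proof -
        have "(of_real (n*x) * cis t)^k = of_real ((n*x)^k) * cis t ^ k"
          by (simp add: power_mult_distrib)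
        also have "cis t ^ k = cis (real k * t)" by (rule Complex.DeMoivre)
        finally have "(of_real (n*x) * cis t)^k = of_real ((n*x)^k) * cis (real k * t)" .
        then show ?thesis by (simp add: a_def scaleR_conv_of_real field_simps)
      qed
      ultimately show ?thesis by simp
    qed
    have nF: "(cmod (F t))^2 = psi (Yf c x * Uf t)" for t
    proof -
      have "cmod (F t) = exp (- n*x) * exp (n*x*cos t)"
        by (simp add: F_def norm_mult norm_exp_eq_Re)
      also have "\<dots> = exp (- n*x + n*x*cos t)" by (simp only: exp_add)
      finally have "(cmod (F t))^2 = exp (- n*x + n*x*cos t) * exp (- n*x + n*x*cos t)" by (simp add: power2_eq_square)
      also have "\<dots> = exp (- n * (Yf c x * Uf t))" unfolding exp_add[symmetric] Yf_def Uf_def c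
        by (simp add: algebra_simps)
      finally show ?thesis by (simp add: psi_def)
    qed
    have cF: "continuous_on {0..2*pi} (\<lambda>t. (cmod (F t))^2)"
      unfolding nF psi_def Yf_def Uf_def by (intro continuous_intros)
    have "(\<lambda>k. (a k)^2) sums (integral {0..2*pi} (\<lambda>t. (cmod (F t))^2) / (2*pi))"
      by (rule parseval_aux[OF a0 sa sF cF])
    moreover have "(\<lambda>t. (cmod (F t))^2) = G.Ph x" by (intro ext) (simp add: nF G.Ph_def)
    ultimately show ?thesis by (simp add: pa G.Sg_def)
  qed
  show ?thesis by (rule G.main) (auto simp: sm)
qed



lemma sq_powr: "(r::real) > 0 \<Longrightarrow> (r powr a)^2 = (r^2) powr a"
proof -
  assume r: "r > 0"
  have "(r powr a)^2 = r powr (2*a)" by (simp add: power2_eq_square powr_add[symmetric])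
  moreover have "(r^2) powr a = r powr (2*a)"
    using r by (simp add: powr_powr[symmetric] powr_numeral)
  ultimately show ?thesis by simp
qed

lemma case_pos:
  fixes n c :: real
  assumes npos: "n > 0" and c: "c > 0"
  shows "concave_on (Ic c) (T n c)
    \<and> (c \<ge> 0 \<longrightarrow> strict_mono_on {0..} (T n c))
    \<and> (c < 0 \<longrightarrow> strict_mono_on {0 .. -1/(2*c)} (T n c)
                 \<and> strict_antimono_on {-1/(2*c) .. -1/c} (T n c))
    \<and> (\<exists>u1 u2. \<forall>x\<in>Ic c.
          (T n c has_real_derivative u1 x) (at x within Ic c)
        \<and> (u1 has_real_derivative u2 x) (at x within Ic c)
        \<and> x*(1 + c*x)*(1 + 2*c*x) * u2 x + (4*(n+c)*x*(1 + c*x) + 1) * u1 x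
            + 2*n*(1 + 2*c*x) * T n c x = 2*n*(1 + 2*c*x))"
proof -
  define m where "m = n / c"
  have m0: "m > 0" using npos c by (simp add: m_def)
  define psi where "psi v = (1 + c * v) powr (- m)" for v :: real
  define psi1 where "psi1 v = - n * (1 + c * v) powr (- m - 1)" for v :: real
  define psi2 where "psi2 v = n * (n + c) * (1 + c * v) powr (- m - 2)" for v :: real
  define psi3 where "psi3 v = n * (n + c) * (- m - 2) * (1 + c * v) powr (- m - 3) * c" for v :: real
  define V where "V = {v::real. 1 + c * v > 0}"
  define J where "J = {x::real. 1 + 2 * c * x > 0}"
  have oV: "open V" unfolding V_def by (intro open_Collect_less continuous_intros)
  have oJ: "open J" unfolding J_def by (intro open_Collect_less continuous_intros)
  have cJ: "convex J"
  proof -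
    have "J = {-1/(2*c)<..}" using c by (auto simp: J_def field_simps)
    then show ?thesis by (simp add: convex_real_interval)
  qed
  have pw: "(1 + c * v) * (1 + c * v) powr (a - 1) = (1 + c * v) powr a" if "v \<in> V" for v a
  proof -
    have pos: "1 + c * v > 0" using that by (simp add: V_def)
    have "(1 + c * v) powr 1 * (1 + c * v) powr (a - 1) = (1 + c * v) powr a"
      by (simp only: powr_add[symmetric]) simp
    moreover have "(1 + c * v) powr 1 = 1 + c * v" using pos by simp
    ultimately show ?thesis by simp
  qed
  have dpow: "((\<lambda>v. (1 + c * v) powr a) has_real_derivative a * (1 + c * v) powr (a - 1) * c) (at v)"
    if "v \<in> V" for v a
    using that unfolding V_def by (auto intro!: derivative_eq_intros)
  interpret G: gen n c psi psi1 psi2 J V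
  proof
    show "open J" by (rule oJ)
    show "convex J" by (rule cJ)
    show "open V" by (rule oV)
    show "n > 0" by (rule npos)
  next
    fix x t assume "x \<in> J"
    then have w: "1 + 2*c*x > 0" by (simp add: J_def)
    have U: "0 \<le> Uf t" "Uf t \<le> 4" by (rule Uf_bounds)+
    have e: "1 + c * (Yf c x * Uf t) = (1 - Uf t / 4) + (Uf t / 4) * (1 + 2*c*x)^2"
      unfolding Yf_def by (simp add: field_simps power2_eq_square)
    have "(1 - Uf t / 4) + (Uf t / 4) * (1 + 2*c*x)^2 > 0"
    proof (cases "Uf t = 0")
      case True then show ?thesis by simp
    next
      case False
      then have "Uf t / 4 * (1 + 2*c*x)^2 > 0" using U w by simp
      moreover have "1 - Uf t / 4 \<ge> 0" using U by simp
      ultimately show ?thesis by linarith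
    qed
    then show "Yf c x * Uf t \<in> V" unfolding V_def using e by simp
  next
    fix v assume v: "v \<in> V"
    then have pos: "1 + c * v > 0" by (simp add: V_def)
    show "(psi has_real_derivative psi1 v) (at v)" unfolding psi_def psi1_def
      by (rule DERIV_cong[OF dpow[OF v]]) (use c in \<open>simp add: m_def field_simps\<close>)
    show "(psi1 has_real_derivative psi2 v) (at v)" unfolding psi1_def psi2_def
      by (rule DERIV_cong[OF DERIV_cmult[OF dpow[OF v]]]) (use c in \<open>simp add: m_def field_simps\<close>)
    show "(1 + c * v) * psi1 v = - n * psi v" unfolding psi1_def psi_def
      using pw[OF v, of "- m"] by (simp add: algebra_simps)
    show "(1 + c * v) * psi2 v = - (n + c) * psi1 v" unfolding psi1_def psi2_def
      using pw[OF v, of "- m - 1"] by (simp add: algebra_simps)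
    show "psi1 v < 0" unfolding psi1_def using npos pos by simp
    show "psi1 v \<le> 0 \<and> 0 \<le> psi2 v" unfolding psi1_def psi2_def using npos pos c by simp
  next
    show "continuous_on V psi2"
    proof (rule continuous_at_imp_continuous_on, intro ballI)
      fix v assume v: "v \<in> V"
      have "(psi2 has_real_derivative n * (n + c) * ((- m - 2) * (1 + c * v) powr (- m - 2 - 1) * c)) (at v)"
        unfolding psi2_def by (rule DERIV_cmult[OF dpow[OF v]])
      then show "isCont psi2 v" by (rule DERIV_isCont)
    qed
  qed
  have sm: "(\<lambda>k. (p n c k x)^2) sums G.Sg x" if x: "x \<in> Ic c" for x
  proof -
    have x0: "x \<ge> 0" using x c by (simp add: Ic_def)
    have cx: "1 + c*x > 0" using x0 c by (simp add: add_pos_nonneg)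
    have xJ: "x \<in> J" using x0 c by (simp add: J_def add_pos_nonneg)
    define w where "w = c*x / (1 + c*x)"
    have w0: "0 \<le> w" "w < 1" using cx x0 c by (auto simp: w_def)
    define B where "B = (1 + c*x) powr (- m)"
    have B0: "B > 0" using cx by (simp add: B_def)
    define a where "a k = p n c k x" for k
    have pk: "a k = B * (((- m) gchoose k) * (- w)^k)" for k
    proof -
      have "(1 + c*x) powr (- m - real k) = B / (1 + c*x)^k"
        unfolding powr_diff powr_realpow[OF cx] B_def ..
      moreover have "(- w)^k = (-1)^k * (c*x)^k / (1 + c*x)^k"
      proof -
        have "(- w)^k = (-1)^k * w^k" by (rule power_minus)
        moreover have "w^k = (c*x)^k / (1 + c*x)^k" unfolding w_def by (rule power_divide)
        ultimately show ?thesis by simp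
      qed
      moreover have "- n / c = - m" by (simp add: m_def)
      ultimately have "a k = (-1)^k * ((- m) gchoose k) * (c*x)^k * (B / (1 + c*x)^k)"
        using c unfolding a_def p_def by simp
      also have "\<dots> = B * (((- m) gchoose k) * ((-1)^k * (c*x)^k / (1 + c*x)^k))"
        by (simp add: divide_inverse mult_ac)
      finally show ?thesis using \<open>(- w)^k = _\<close> by simp
    qed
    have a0: "a k \<ge> 0" for k
    proof -
      have "(-1)^k * ((- m) gchoose k) = (-1)^k * ((-1)^k * ((m + of_nat k - 1) gchoose k))"
        by (simp only: gbinomial_minus)
      also have "\<dots> = ((-1) * (-1))^k * ((m + of_nat k - 1) gchoose k)"
        by (simp only: power_mult_distrib mult.assoc)
      also have "\<dots> = ((m + of_nat k - 1) gchoose k)" by simp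
      also have "\<dots> = pochhammer m k / fact k" by (simp add: gbinomial_pochhammer')
      also have "\<dots> \<ge> 0" using m0 by (simp add: pochhammer_pos less_imp_le)
      finally have g: "(-1)^k * ((- m) gchoose k) \<ge> 0" .
      have "(- w)^k = (-1)^k * w^k" by (rule power_minus)
      then have "a k = B * (((-1)^k * ((- m) gchoose k)) * w^k)"
        unfolding pk by (simp only: mult_ac)
      then show ?thesis using g B0 w0 by simp
    qed
    have sa: "summable a"
    proof -
      have "(\<lambda>k. ((- m) gchoose k) * (- w)^k) sums (1 + (- w)) powr (- m)"
        by (rule gen_binomial_real) (use w0 in simp)
      then have "summable (\<lambda>k. ((- m) gchoose k) * (- w)^k)" by (rule sums_summable)
      then have "summable (\<lambda>k. B * (((- m) gchoose k) * (- w)^k))" by (rule summable_mult)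
      moreover have "a = (\<lambda>k. B * (((- m) gchoose k) * (- w)^k))" using pk by (intro ext)
      ultimately show ?thesis by (simp only:)
    qed
    define F where "F t = of_real B * (1 + of_real (- w) * cis t) powr (of_real (- m) :: complex)" for t
    have sF: "(\<lambda>k. of_real (a k) * cis (real k * t)) sums F t" for t
    proof -
      have nz: "norm (of_real (- w) * cis t :: complex) < 1" using w0 by (simp add: norm_mult)
      have "(\<lambda>k. (of_real (- m) gchoose k) * (of_real (- w) * cis t)^k) sums (1 + of_real (- w) * cis t) powr (of_real (- m) :: complex)"
        by (rule gen_binomial_complex[OF nz])
      then have "(\<lambda>k. of_real B * ((of_real (- m) gchoose k) * (of_real (- w) * cis t)^k)) sums F t"
        unfolding F_def by (rule sums_mult)
      moreover have "of_real B * ((of_real (- m) gchoose k) * (of_real (- w) * cis t)^k) = of_real (a k) * cis (real k * t)" for k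
      proof -
        have g: "(of_real (- m) gchoose k :: complex) = of_real ((- m) gchoose k)"
          by (simp add: gbinomial_prod_rev)
        have "(of_real (- w) * cis t)^k = (of_real (- w))^k * cis t ^ k"
          by (rule power_mult_distrib)
        also have "(of_real (- w))^k = (of_real ((- w)^k) :: complex)" by (rule of_real_power[symmetric])
        also have "cis t ^ k = cis (real k * t)" by (rule Complex.DeMoivre)
        finally have "(of_real (- w) * cis t)^k = of_real ((- w)^k) * cis (real k * t)" .
        then show ?thesis unfolding g pk by simp
      qed
      ultimately show ?thesis by simp
    qed
    have nF: "(cmod (F t))^2 = psi (Yf c x * Uf t)" for t
    proof -
      let ?z = "1 + of_real (- w) * cis t :: complex"
      have z2: "(cmod ?z)^2 = (1 - w * cos t)^2 + (w * sin t)^2"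
        by (simp add: cmod_power2)
      have zpos: "cmod ?z > 0"
      proof -
        have "norm (of_real (- w) * cis t :: complex) < 1" using w0 by (simp add: norm_mult)
        then have "?z \<noteq> 0" by (metis add.commute add_eq_0_iff norm_minus_cancel norm_one order_less_irrefl)
        then show ?thesis by simp
      qed
      have "cmod (F t) = B * cmod ?z powr (- m)"
        unfolding F_def using B0 by (simp add: norm_mult norm_powr_real_powr')
      then have "(cmod (F t))^2 = B^2 * (cmod ?z powr (- m))^2" by (simp add: power_mult_distrib)
      also have "\<dots> = ((1 + c*x)^2) powr (- m) * ((cmod ?z)^2) powr (- m)"
        unfolding B_def using cx zpos by (simp add: sq_powr)
      also have "\<dots> = ((1 + c*x)^2 * (cmod ?z)^2) powr (- m)"
        by (simp add: powr_mult)
      also have "(1 + c*x)^2 * (cmod ?z)^2 = 1 + c * (Yf c x * Uf t)"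
      proof -
        have "(1 + c*x)^2 * (cmod ?z)^2 = ((1 + c*x) - c*x * cos t)^2 + (c*x * sin t)^2"
        proof -
          have ww: "(1 + c*x) * w = c*x" using cx by (simp add: w_def)
          have "(1 + c*x)^2 * (cmod ?z)^2 = ((1 + c*x) - ((1 + c*x) * w) * cos t)^2 + (((1 + c*x) * w) * sin t)^2"
            unfolding z2 by (simp add: power2_eq_square algebra_simps)
          then show ?thesis unfolding ww .
        qed
        also have "\<dots> = 1 + c * (Yf c x * Uf t) + (c*x)^2 * ((sin t)^2 + (cos t)^2 - 1)"
          unfolding Yf_def Uf_def by algebra
        finally show ?thesis by simp
      qed
      finally show ?thesis by (simp add: psi_def)
    qed
    have cF: "continuous_on {0..2*pi} (\<lambda>t. (cmod (F t))^2)"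
    proof -
      have "continuous_on {0..2*pi} (\<lambda>t. Yf c x * Uf t)" unfolding Uf_def by (intro continuous_intros)
      then have "continuous_on {0..2*pi} (\<lambda>t. psi (Yf c x * Uf t))"
        by (rule continuous_on_compose2[OF G.c0]) (use G.YU_in[OF xJ] in auto)
      then show ?thesis by (simp add: nF)
    qed
    have "(\<lambda>k. (a k)^2) sums (integral {0..2*pi} (\<lambda>t. (cmod (F t))^2) / (2*pi))"
      by (rule parseval_aux[OF a0 sa sF cF])
    moreover have "(\<lambda>t. (cmod (F t))^2) = G.Ph x" by (intro ext) (simp add: nF G.Ph_def)
    ultimately show ?thesis by (simp add: a_def G.Sg_def)
  qed
  have IJ: "Ic c \<subseteq> J" using c by (auto simp: Ic_def J_def add_pos_nonneg)
  show ?thesis by (rule G.main[OF IJ sm])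
qed



lemma case_neg:
  fixes n c :: real and l :: nat
  assumes npos: "n > 0" and c: "c < 0" and nl: "n = - c * real l"
  shows "concave_on (Ic c) (T n c)
    \<and> (c \<ge> 0 \<longrightarrow> strict_mono_on {0..} (T n c))
    \<and> (c < 0 \<longrightarrow> strict_mono_on {0 .. -1/(2*c)} (T n c)
                 \<and> strict_antimono_on {-1/(2*c) .. -1/c} (T n c))
    \<and> (\<exists>u1 u2. \<forall>x\<in>Ic c.
          (T n c has_real_derivative u1 x) (at x within Ic c)
        \<and> (u1 has_real_derivative u2 x) (at x within Ic c)
        \<and> x*(1 + c*x)*(1 + 2*c*x) * u2 x + (4*(n+c)*x*(1 + c*x) + 1) * u1 x
            + 2*n*(1 + 2*c*x) * T n c x = 2*n*(1 + 2*c*x))"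
proof -
  have l1: "l \<ge> 1"
  proof (rule ccontr)
    assume "\<not> l \<ge> 1" then have "l = 0" by simp
    then show False using npos nl by simp
  qed
  have lc: "real l * c = - n" using nl by simp
  have nc: "n + c = - c * (real l - 1)" using nl by (simp add: algebra_simps)
  have nc0: "n + c \<ge> 0"
  proof -
    have "real l - 1 \<ge> 0" using l1 by simp
    then have "c * (real l - 1) \<le> 0" using c by (simp add: mult_nonpos_nonneg)
    then show ?thesis using nc by simp
  qed
  define psi where "psi v = (1 + c * v)^l" for v :: real
  define psi1 where "psi1 v = - n * (1 + c * v)^(l - 1)" for v :: real
  define psi2 where "psi2 v = n * (n + c) * (1 + c * v)^(l - 2)" for v :: real
  have dpow: "((\<lambda>v. (1 + c * v)^k) has_real_derivative real k * (1 + c * v)^(k - 1) * c) (at v)" for v k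
    by (auto intro!: derivative_eq_intros)
  interpret G: gen n c psi psi1 psi2 UNIV UNIV
  proof
    fix v :: real
    show "(psi has_real_derivative psi1 v) (at v)" unfolding psi_def psi1_def
      by (rule DERIV_cong[OF dpow]) (simp add: lc[symmetric] mult_ac)
    show "(psi1 has_real_derivative psi2 v) (at v)" unfolding psi1_def psi2_def
    proof (rule DERIV_cong[OF DERIV_cmult[OF dpow]])
      have "real (l - 1) = real l - 1" using l1 by (simp add: of_nat_diff)
      moreover have "l - 1 - 1 = l - 2" by simp
      ultimately show "- n * (real (l - 1) * (1 + c * v) ^ (l - 1 - 1) * c) = n * (n + c) * (1 + c * v) ^ (l - 2)"
        unfolding nc by (simp add: algebra_simps)
    qed
    show "(1 + c * v) * psi1 v = - n * psi v" unfolding psi1_def psi_def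
    proof -
      have "(1 + c * v) * (1 + c * v)^(l - 1) = (1 + c * v)^l"
        using l1 by (simp flip: power_Suc)
      then show "(1 + c * v) * (- n * (1 + c * v) ^ (l - 1)) = - n * (1 + c * v) ^ l"
        by (simp add: algebra_simps)
    qed
    show "(1 + c * v) * psi2 v = - (n + c) * psi1 v" unfolding psi1_def psi2_def
    proof (cases "l = 1")
      case True
      then have "n + c = 0" using nc by simp
      then show "(1 + c * v) * (n * (n + c) * (1 + c * v) ^ (l - 2)) = - (n + c) * (- n * (1 + c * v) ^ (l - 1))"
        by simp
    next
      case False
      then have "(1 + c * v) * (1 + c * v)^(l - 2) = (1 + c * v)^(l - 1)"
        using l1 by (simp flip: power_Suc) (metis Suc_diff_Suc Suc_le_eq diff_Suc_1 le_neq_implies_less numeral_2_eq_2)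
      then show "(1 + c * v) * (n * (n + c) * (1 + c * v) ^ (l - 2)) = - (n + c) * (- n * (1 + c * v) ^ (l - 1))"
        by (simp add: algebra_simps)
    qed
    show "0 < 1 + c * v \<Longrightarrow> psi1 v < 0" using npos by (simp add: psi1_def)
    show "0 \<le> 1 + c * v \<Longrightarrow> psi1 v \<le> 0 \<and> 0 \<le> psi2 v" using npos nc0 by (simp add: psi1_def psi2_def)
  next
    show "continuous_on UNIV psi2" unfolding psi2_def by (intro continuous_intros)
  qed (use npos in auto)
  have sm: "(\<lambda>k. (p n c k x)^2) sums G.Sg x" if x: "x \<in> Ic c" for x
  proof -
    have x0: "0 \<le> x" "x \<le> -1/c" using x c by (auto simp: Ic_def)
    have cx: "1 + c*x \<ge> 0"
    proof -
      have "c * x \<ge> c * (-1/c)" using x0 c by (intro mult_left_mono_neg) auto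
      then show ?thesis using c by simp
    qed
    have cx0: "- c * x \<ge> 0" using x0 c by (simp add: mult_nonpos_nonneg)
    define a where "a k = real (l choose k) * (- c * x)^k * (1 + c * x)^(l - k)" for k
    have ml: "- n / c = real l" using nl c by (simp add: field_simps)
    have pa: "p n c k x = a k" for k
    proof (cases "k \<le> l")
      case True
      have "(1 + c * x) powi (\<lfloor>- n / c\<rfloor> - int k) = (1 + c*x)^(l - k)"
        unfolding ml using True by (simp add: power_int_of_nat[symmetric] of_nat_diff)
      moreover have "(real l gchoose k) = real (l choose k)" by (simp add: binomial_gbinomial)
      ultimately show ?thesis using c unfolding p_def a_def ml
        by (simp add: power_minus[of "c * x"] mult_ac)
    next
      case False
      then have "(real l gchoose k) = 0" by (simp add: binomial_gbinomial[symmetric])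
      then show ?thesis using c False unfolding p_def a_def ml by simp
    qed
    have a0: "a k \<ge> 0" for k using cx cx0 by (simp add: a_def)
    have az: "a k = 0" if "k \<notin> {..l}" for k using that by (simp add: a_def)
    have sa: "summable a" using sums_summable[OF sums_finite[OF finite_atMost az]] .
    define F where "F t = (of_real (1 + c*x) + of_real (- c * x) * cis t :: complex)^l" for t
    have sF: "(\<lambda>k. of_real (a k) * cis (real k * t)) sums F t" for t
    proof -
      have "(\<lambda>k. of_real (a k) * cis (real k * t)) sums (\<Sum>k\<in>{..l}. of_real (a k) * cis (real k * t) :: complex)"
        by (rule sums_finite) (auto simp: az)
      moreover have "(\<Sum>k\<in>{..l}. of_real (a k) * cis (real k * t) :: complex) = F t"
      proof -
        have "F t = (of_real (- c * x) * cis t + of_real (1 + c*x))^l" by (simp add: F_def add.commute)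
        also have "\<dots> = (\<Sum>k\<le>l. of_nat (l choose k) * (of_real (- c * x) * cis t)^k * (of_real (1 + c*x))^(l - k))"
          by (rule binomial_ring)
        also have "\<dots> = (\<Sum>k\<le>l. of_real (a k) * cis (real k * t))"
        proof (rule sum.cong[OF refl])
          fix k
          have "(of_real (- c * x) * cis t)^k = (of_real (- c * x))^k * cis t ^ k"
            by (rule power_mult_distrib)
          also have "cis t ^ k = cis (real k * t)" by (rule Complex.DeMoivre)
          finally show "of_nat (l choose k) * (of_real (- c * x) * cis t)^k * (of_real (1 + c*x))^(l - k)
              = (of_real (a k) * cis (real k * t) :: complex)"
            by (simp add: a_def mult_ac)
        qed
        finally show ?thesis by simp
      qed
      ultimately show ?thesis by simp
    qed
    have nF: "(cmod (F t))^2 = psi (Yf c x * Uf t)" for t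
    proof -
      let ?z = "of_real (1 + c*x) + of_real (- c * x) * cis t :: complex"
      have z2: "(cmod ?z)^2 = (1 + c*x - c*x * cos t)^2 + (c * x * sin t)^2"
      proof -
        have "(cmod ?z)^2 = (Re ?z)^2 + (Im ?z)^2" by (rule cmod_power2)
        moreover have "Re ?z = 1 + c*x - c*x * cos t" by simp
        moreover have "Im ?z = - (c * x * sin t)" by simp
        ultimately show ?thesis by (simp add: power2_eq_square)
      qed
      have "(cmod ?z)^2 = 1 + c * (Yf c x * Uf t) + (c*x)^2 * ((sin t)^2 + (cos t)^2 - 1)"
        unfolding z2 Yf_def Uf_def by algebra
      then have e: "(cmod ?z)^2 = 1 + c * (Yf c x * Uf t)" by simp
      have "(cmod (F t))^2 = ((cmod ?z)^2)^l" unfolding F_def by (simp add: norm_power power_mult[symmetric] mult.commute)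
      then show ?thesis unfolding e psi_def .
    qed
    have cF: "continuous_on {0..2*pi} (\<lambda>t. (cmod (F t))^2)"
      unfolding nF psi_def Yf_def Uf_def by (intro continuous_intros)
    have "(\<lambda>k. (a k)^2) sums (integral {0..2*pi} (\<lambda>t. (cmod (F t))^2) / (2*pi))"
      by (rule parseval_aux[OF a0 sa sF cF])
    moreover have "(\<lambda>t. (cmod (F t))^2) = G.Ph x" by (intro ext) (simp add: nF G.Ph_def)
    ultimately show ?thesis by (simp add: pa G.Sg_def)
  qed
  show ?thesis by (rule G.main) (auto simp: sm)
qed


theorem theorem4p2:
  fixes n c :: real
  assumes npos: "n > 0"
    and cnonneg: "c \<ge> 0 \<Longrightarrow> n > c"
    and cneg: "c < 0 \<Longrightarrow> \<exists>l::nat. n = - c * real l"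
  shows "concave_on (Ic c) (T n c)
    \<and> (c \<ge> 0 \<longrightarrow> strict_mono_on {0..} (T n c))
    \<and> (c < 0 \<longrightarrow> strict_mono_on {0 .. -1/(2*c)} (T n c)
                 \<and> strict_antimono_on {-1/(2*c) .. -1/c} (T n c))
    \<and> (\<exists>u1 u2. \<forall>x\<in>Ic c.
          (T n c has_real_derivative u1 x) (at x within Ic c)
        \<and> (u1 has_real_derivative u2 x) (at x within Ic c)
        \<and> x*(1+c*x)*(1+2*c*x) * u2 x + (4*(n+c)*x*(1+c*x) + 1) * u1 x
            + 2*n*(1+2*c*x) * T n c x = 2*n*(1+2*c*x))"
proof (cases c "0::real" rule: linorder_cases)
  case less
  then obtain l :: nat where l: "n = - c * real l" using cneg by blast
  show ?thesis using case_neg[OF npos less l] by simp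
next
  case equal
  show ?thesis using case_zero[OF npos equal] by simp
next
  case greater
  show ?thesis using case_pos[OF npos greater] by simp
qed

end
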